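(* Let $(X,d)$ be a complete metric space with a convex mean $\#$. Then $\#$ inductively $\beta$-extends to a symmetric, nonexpansive, coordinatewise $(1/2)$-contractive $n$-mean for every $n>2$; that is, there are such $n$-means $\mu_n$ ($n\ge3$) with $\mu_3$ a $\beta$-extension of $\#$ and $\mu_{n+1}$ a $\beta$-extension of $\mu_n$.
   Context: A convex mean on a complete metric space $X$ is a symmetric 2-mean $(x,y)\mapsto x\#y$ (so $x\#x=x$, $x\#y=y\#x$) with $d(x\#z,y\#z)\le\frac12 d(x,y)$ for all $x,y,z$. A $k$-mean is a map $\mu:X^k\to X$ with $\mu(x,\ldots,x)=x$; symmetric means permutation invariant. Nonexpansive: $d(\mu(\mathbf{x}),\mu(\mathbf{y}))\le\max_j d(x_j,y_j)$; coordinatewise $\rho$-contractive: $d(\mu(\mathbf{x}),\mu(\mathbf{y}))\le\rho\,d(x_j,y_j)$ when $\mathbf{x},\mathbf{y}$ differ only in coordinate $j$. Barycentric operator of a $k$-mean: $\beta(\mathbf{x})_j=\mu(x_1,\ldots,\widehat{x_j},\ldots,x_{k+1})$; a $(k+1)$-mean $\nu$ $\beta$-extends $\mu$ if $\beta^m(\mathbf{x})\to(\nu(\mathbf{x}),\ldots,\nu(\mathbf{x}))$ for every $\mathbf{x}$. *)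

theory Defs
  imports "HOL-Analysis.Analysis" "HOL-Library.Multiset"
begin

text \<open>A k-mean on X is represented as a function on lists; only its values on
  lists of length k are relevant. Coordinates are indexed 0..k-1.\<close>

definition convex_mean :: "('a::metric_space \<Rightarrow> 'a \<Rightarrow> 'a) \<Rightarrow> bool" where
  "convex_mean m \<longleftrightarrow> (\<forall>x. m x x = x) \<and> (\<forall>x y. m x y = m y x) \<and>
     (\<forall>x y z. dist (m x z) (m y z) \<le> dist x y / 2)"

definition is_kmean :: "nat \<Rightarrow> ('a list \<Rightarrow> 'a) \<Rightarrow> bool" where
  "is_kmean k \<mu> \<longleftrightarrow> (\<forall>x. \<mu> (replicate k x) = x)"

definition symmetric_kmean :: "nat \<Rightarrow> ('a list \<Rightarrow> 'a) \<Rightarrow> bool" where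
  "symmetric_kmean k \<mu> \<longleftrightarrow>
     (\<forall>xs ys. length xs = k \<and> mset ys = mset xs \<longrightarrow> \<mu> ys = \<mu> xs)"

definition nonexpansive_kmean :: "nat \<Rightarrow> ('a::metric_space list \<Rightarrow> 'a) \<Rightarrow> bool" where
  "nonexpansive_kmean k \<mu> \<longleftrightarrow>
     (\<forall>xs ys. length xs = k \<and> length ys = k \<longrightarrow>
        dist (\<mu> xs) (\<mu> ys) \<le> (MAX j\<in>{..<k}. dist (xs ! j) (ys ! j)))"

definition coord_contractive :: "nat \<Rightarrow> real \<Rightarrow> ('a::metric_space list \<Rightarrow> 'a) \<Rightarrow> bool" where
  "coord_contractive k \<rho> \<mu> \<longleftrightarrow>
     (\<forall>xs ys j. length xs = k \<and> length ys = k \<and> j < k \<and>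
        (\<forall>i<k. i \<noteq> j \<longrightarrow> xs ! i = ys ! i) \<longrightarrow>
        dist (\<mu> xs) (\<mu> ys) \<le> \<rho> * dist (xs ! j) (ys ! j))"

definition bary :: "('a list \<Rightarrow> 'a) \<Rightarrow> 'a list \<Rightarrow> 'a list" where
  "bary \<mu> xs = map (\<lambda>j. \<mu> (take j xs @ drop (Suc j) xs)) [0..<length xs]"

text \<open>The (k+1)-mean \<nu> beta-extends the k-mean \<mu>: for every (k+1)-tuple, the
  iterates of the barycentric operator converge (in the product topology,
  i.e. coordinatewise) to the diagonal tuple of \<nu>.\<close>
definition beta_extends :: "nat \<Rightarrow> ('a::metric_space list \<Rightarrow> 'a) \<Rightarrow> ('a list \<Rightarrow> 'a) \<Rightarrow> bool" where
  "beta_extends k \<mu> \<nu> \<longleftrightarrow>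
     (\<forall>xs. length xs = Suc k \<longrightarrow>
        (\<forall>j<Suc k. (\<lambda>m. ((bary \<mu> ^^ m) xs) ! j) \<longlonglongrightarrow> \<nu> xs))"

end

theory Submission
  imports Defs
begin


definition del :: "nat \<Rightarrow> 'a list \<Rightarrow> 'a list" where
  "del j xs = take j xs @ drop (Suc j) xs"

lemma length_del[simp]: "j < length xs \<Longrightarrow> length (del j xs) = length xs - 1"
  unfolding del_def by simp

lemma nth_del: "l < length xs \<Longrightarrow> j < length xs - 1 \<Longrightarrow>
   del l xs ! j = xs ! (if j < l then j else Suc j)"
  unfolding del_def by (auto simp: nth_append min_def)

lemma length_bary[simp]: "length (bary \<mu> xs) = length xs"
  unfolding bary_def by simp

lemma nth_bary: "j < length xs \<Longrightarrow> bary \<mu> xs ! j = \<mu> (del j xs)"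
  unfolding bary_def del_def by simp

lemma length_bary_pow[simp]: "length ((bary \<mu> ^^ m) xs) = length xs"
  by (induction m) auto

lemma mset_del: "j < length xs \<Longrightarrow> mset (del j xs) = mset xs - {#xs ! j#}"
proof -
  assume j: "j < length xs"
  have "mset xs = mset (take j xs @ xs ! j # drop (Suc j) xs)"
    using id_take_nth_drop[OF j] by metis
  then show ?thesis unfolding del_def by simp
qed

lemma del_replicate: "j < n \<Longrightarrow> del j (replicate n x) = replicate (n - 1) x"
  unfolding del_def by (simp add: replicate_add[symmetric])

lemma bary_replicate: "bary \<mu> (replicate n x) = replicate n (\<mu> (replicate (n-1) x))"
  by (rule nth_equalityI) (auto simp: nth_bary del_replicate)

lemma cauchy_geom:
  fixes f :: "nat \<Rightarrow> 'a::metric_space"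
  assumes h: "\<And>m. dist (f (Suc m)) (f m) \<le> D / 2 ^ m"
  shows "Cauchy f"
proof -
  have D0: "D \<ge> 0" using h[of 0] zero_le_dist[of "f 1" "f 0"] by (simp del: zero_le_dist)
  have b: "dist (f m) (f (m + p)) \<le> 2 * D / 2 ^ m - 2 * D / 2 ^ (m + p)" for m p
  proof (induction p)
    case 0 then show ?case by simp
  next
    case (Suc p)
    have "dist (f m) (f (m + Suc p)) \<le> dist (f m) (f (m + p)) + dist (f (Suc (m + p))) (f (m + p))"
      using dist_triangle[of "f m" "f (m + Suc p)" "f (m + p)"] by (simp add: dist_commute)
    also have "\<dots> \<le> 2 * D / 2 ^ m - 2 * D / 2 ^ (m + p) + D / 2 ^ (m + p)"
      using Suc h[of "m + p"] by linarith
    also have "\<dots> = 2 * D / 2 ^ m - 2 * D / 2 ^ (m + Suc p)"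
      by (simp add: field_simps)
    finally show ?case .
  qed
  have b2: "dist (f m) (f n) \<le> 2 * D / 2 ^ m" if "m \<le> n" for m n
  proof -
    obtain p where "n = m + p" using \<open>m \<le> n\<close> le_Suc_ex by blast
    have "2 * D / 2 ^ (m + p) \<ge> 0" using D0 by simp
    then show ?thesis using b[of m p] \<open>n = m + p\<close> by simp
  qed
  show ?thesis
  proof (rule metric_CauchyI)
    fix e :: real assume e: "e > 0"
    obtain M where M: "(1/2::real) ^ M < e / (4 * D + 1)"
      using real_arch_pow_inv[of "e / (4 * D + 1)" "1/2"] e D0 by auto
    have less4: "4 * D / 2 ^ M < e"
    proof -
      have "4 * D / 2 ^ M = 4 * D * (1/2) ^ M" by (simp add: power_one_over)
      also have "\<dots> \<le> (4 * D + 1) * (1/2) ^ M" by (simp add: mult_right_mono)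
      also have "\<dots> < (4 * D + 1) * (e / (4 * D + 1))"
        using M D0 by (intro mult_strict_left_mono) auto
      also have "\<dots> = e" using D0 by simp
      finally show ?thesis .
    qed
    have bnd: "dist (f m) (f n) \<le> 4 * D / 2 ^ M" if "m \<ge> M" "n \<ge> M" for m n
    proof -
      have "dist (f m) (f n) \<le> dist (f M) (f m) + dist (f M) (f n)" by (rule dist_triangle3)
      also have "\<dots> \<le> 2 * D / 2 ^ M + 2 * D / 2 ^ M" using b2 that by (intro add_mono) auto
      finally show ?thesis by simp
    qed
    show "\<exists>M. \<forall>m\<ge>M. \<forall>n\<ge>M. dist (f m) (f n) < e"
    proof (intro exI[of _ M] allI impI)
      fix m n assume "m \<ge> M" "n \<ge> M"
      from bnd[OF this] less4 show "dist (f m) (f n) < e" by linarith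
    qed
  qed
qed

lemma geom_tendsto0: "(\<lambda>m. D / 2 ^ m :: real) \<longlonglongrightarrow> 0"
proof -
  have "(\<lambda>m. D * (1/2) ^ m :: real) \<longlonglongrightarrow> D * 0"
    by (intro tendsto_mult tendsto_const LIMSEQ_power_zero) auto
  then show ?thesis by (simp add: power_one_over)
qed

lemma transfer_lim:
  fixes X Y :: "nat \<Rightarrow> 'a::metric_space"
  assumes X: "X \<longlonglongrightarrow> L" and h: "\<And>m. dist (Y m) (X m) \<le> D / 2 ^ m"
  shows "Y \<longlonglongrightarrow> L"
proof -
  have X0: "(\<lambda>m. dist (X m) L) \<longlonglongrightarrow> 0" by (rule iffD1[OF tendsto_dist_iff X])
  have up0: "(\<lambda>m. D / 2 ^ m + dist (X m) L) \<longlonglongrightarrow> 0 + 0"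
    by (rule tendsto_add[OF geom_tendsto0 X0])
  have up: "(\<lambda>m. D / 2 ^ m + dist (X m) L) \<longlonglongrightarrow> 0"
    using up0 by (simp only: add_0_left)
  have e1: "eventually (\<lambda>m. (0::real) \<le> dist (Y m) L) sequentially"
    by (rule always_eventually) (rule allI, rule zero_le_dist)
  have "dist (Y m) L \<le> D / 2 ^ m + dist (X m) L" for m
    using h[of m] dist_triangle[of "Y m" L "X m"] by linarith
  then have e2: "eventually (\<lambda>m. dist (Y m) L \<le> D / 2 ^ m + dist (X m) L) sequentially"
    by (intro always_eventually allI)
  have "(\<lambda>m. dist (Y m) L) \<longlonglongrightarrow> 0"
    by (rule tendsto_sandwich[OF e1 e2 tendsto_const up])
  then show ?thesis by (rule iffD2[OF tendsto_dist_iff])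
qed



definition PP :: "nat \<Rightarrow> ('a::metric_space list \<Rightarrow> 'a) \<Rightarrow> bool" where
  "PP k \<mu> \<longleftrightarrow> is_kmean k \<mu> \<and> symmetric_kmean k \<mu> \<and>
             nonexpansive_kmean k \<mu> \<and> coord_contractive k (1/2) \<mu>"

lemma mset_aux: "a \<in># M \<Longrightarrow> b \<in># M - {#a#} \<Longrightarrow> add_mset a (M - {#a#} - {#b#}) = M - {#b#}"
  by (metis diff_union_swap insert_DiffM)

context
  fixes k :: nat and \<mu> :: "'a::metric_space list \<Rightarrow> 'a"
  assumes P: "PP k \<mu>" and k2: "k \<ge> 2"
begin

lemma pair_lt:
  assumes len: "length xs = Suc k" and ij: "i < j" "j < Suc k"
  shows "dist (\<mu> (del i xs)) (\<mu> (del j xs)) \<le> 1/2 * dist (xs ! i) (xs ! j)"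
proof -
  let ?d = "del i xs"
  define ys where "ys = ?d[j - 1 := xs ! i]"
  have ld: "length ?d = k" using len ij by simp
  have "?d ! (j - 1) = xs ! (if j - 1 < i then j - 1 else Suc (j - 1))"
    using len ij by (intro nth_del) auto
  moreover have "\<not> j - 1 < i" "Suc (j - 1) = j" using ij by auto
  ultimately have dj: "?d ! (j - 1) = xs ! j" by simp
  have j1: "j - 1 < k" using ij by simp
  have "mset ys = add_mset (xs ! i) (mset ?d - {#xs ! j#})"
    unfolding ys_def using mset_update[of "j - 1" ?d] ld j1 dj by simp
  also have "\<dots> = add_mset (xs ! i) (mset xs - {#xs ! i#} - {#xs ! j#})"
    using mset_del[of i xs] len ij by simp
  also have "\<dots> = mset xs - {#xs ! j#}"
  proof (rule mset_aux)
    show "xs ! i \<in># mset xs" using len ij by simp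
    have "xs ! j \<in> set ?d" using dj ld j1 by (metis nth_mem)
    then show "xs ! j \<in># mset xs - {#xs ! i#}" using mset_del[of i xs] len ij
      by (metis Suc_lessD less_trans_Suc set_mset_mset)
  qed
  also have "\<dots> = mset (del j xs)" using mset_del[of j xs] len ij by simp
  finally have ms: "mset ys = mset (del j xs)" .
  have "\<mu> ys = \<mu> (del j xs)"
    using P ms len ij unfolding PP_def symmetric_kmean_def by simp
  moreover have "dist (\<mu> ?d) (\<mu> ys) \<le> 1/2 * dist (?d ! (j - 1)) (ys ! (j - 1))"
    using P[unfolded PP_def coord_contractive_def, THEN conjunct2, THEN conjunct2, THEN conjunct2,
        rule_format, of ?d ys "j - 1"] ld j1
    by (auto simp: ys_def)
  ultimately show ?thesis using dj ld j1 by (simp add: ys_def dist_commute)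
qed

lemma pair:
  assumes len: "length xs = Suc k" and ij: "i < Suc k" "j < Suc k"
  shows "dist (\<mu> (del i xs)) (\<mu> (del j xs)) \<le> 1/2 * dist (xs ! i) (xs ! j)"
proof -
  consider "i < j" | "i = j" | "j < i" by linarith
  then show ?thesis
  proof cases
    case 1 then show ?thesis using pair_lt len ij by blast
  next
    case 2 then show ?thesis by simp
  next
    case 3 then show ?thesis using pair_lt[OF len 3 ij(1)] by (simp add: dist_commute)
  qed
qed

lemma diam_step:
  assumes len: "length xs = Suc k"
    and D: "\<forall>i<Suc k. \<forall>j<Suc k. dist (xs ! i) (xs ! j) \<le> D"
  shows "\<forall>i<Suc k. \<forall>j<Suc k. dist (bary \<mu> xs ! i) (bary \<mu> xs ! j) \<le> D / 2"
proof (intro allI impI)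
  fix i j assume ij: "i < Suc k" "j < Suc k"
  have "dist (bary \<mu> xs ! i) (bary \<mu> xs ! j) \<le> 1/2 * dist (xs ! i) (xs ! j)"
    using pair[OF len ij] len ij by (simp add: nth_bary)
  also have "\<dots> \<le> D / 2" using D ij by simp
  finally show "dist (bary \<mu> xs ! i) (bary \<mu> xs ! j) \<le> D / 2" .
qed

lemma move_step:
  assumes len: "length xs = Suc k"
    and D: "\<forall>i<Suc k. \<forall>j<Suc k. dist (xs ! i) (xs ! j) \<le> D" and i: "i < Suc k"
  shows "dist (bary \<mu> xs ! i) (xs ! i) \<le> D"
proof -
  have ld: "length (del i xs) = k" using len i by simp
  have "dist (\<mu> (del i xs)) (\<mu> (replicate k (xs ! i)))
        \<le> (MAX j\<in>{..<k}. dist (del i xs ! j) (replicate k (xs ! i) ! j))"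
    using P[unfolded PP_def nonexpansive_kmean_def, THEN conjunct2, THEN conjunct2, THEN conjunct1,
        rule_format, of "del i xs" "replicate k (xs ! i)"] ld by simp
  also have "\<dots> \<le> D"
  proof (subst Max_le_iff)
    show "finite ((\<lambda>j. dist (del i xs ! j) (replicate k (xs ! i) ! j)) ` {..<k})" by simp
    show "(\<lambda>j. dist (del i xs ! j) (replicate k (xs ! i) ! j)) ` {..<k} \<noteq> {}" 
    proof -
      have "0 \<in> {..<k}" using k2 by simp
      then show ?thesis by blast
    qed
    show "\<forall>a\<in>(\<lambda>j. dist (del i xs ! j) (replicate k (xs ! i) ! j)) ` {..<k}. a \<le> D"
    proof
      fix a assume "a \<in> (\<lambda>j. dist (del i xs ! j) (replicate k (xs ! i) ! j)) ` {..<k}"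
      then obtain j where j: "j < k" and a: "a = dist (del i xs ! j) (xs ! i)" by auto
      have "del i xs ! j = xs ! (if j < i then j else Suc j)" using nth_del[of i xs j] len i j by simp
      then show "a \<le> D" using D a i j by auto
    qed
  qed
  finally show ?thesis using P len i unfolding PP_def is_kmean_def by (simp add: nth_bary)
qed

lemma ne_step:
  assumes len: "length xs = Suc k" "length ys = Suc k"
    and E: "\<forall>l<Suc k. dist (xs ! l) (ys ! l) \<le> E"
  shows "\<forall>l<Suc k. dist (bary \<mu> xs ! l) (bary \<mu> ys ! l) \<le> E"
proof (intro allI impI)
  fix l assume l: "l < Suc k"
  have "dist (\<mu> (del l xs)) (\<mu> (del l ys))
        \<le> (MAX j\<in>{..<k}. dist (del l xs ! j) (del l ys ! j))"
    using P len l unfolding PP_def nonexpansive_kmean_def by simp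
  also have "\<dots> \<le> E"
  proof (subst Max_le_iff)
    show "finite ((\<lambda>j. dist (del l xs ! j) (del l ys ! j)) ` {..<k})" by simp
    show "(\<lambda>j. dist (del l xs ! j) (del l ys ! j)) ` {..<k} \<noteq> {}" 
    proof -
      have "0 \<in> {..<k}" using k2 by simp
      then show ?thesis by blast
    qed
    show "\<forall>a\<in>(\<lambda>j. dist (del l xs ! j) (del l ys ! j)) ` {..<k}. a \<le> E"
    proof
      fix a assume "a \<in> (\<lambda>j. dist (del l xs ! j) (del l ys ! j)) ` {..<k}"
      then obtain j where j: "j < k" and a: "a = dist (del l xs ! j) (del l ys ! j)" by auto
      then show "a \<le> E" using E len l j by (auto simp: nth_del)
    qed
  qed
  finally show "dist (bary \<mu> xs ! l) (bary \<mu> ys ! l) \<le> E" using len l by (simp add: nth_bary)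
qed

lemma cc_step:
  assumes len: "length xs = Suc k" "length ys = Suc k" and j: "j < Suc k"
    and same: "\<forall>i<Suc k. i \<noteq> j \<longrightarrow> xs ! i = ys ! i"
  shows "\<forall>l<Suc k. dist (bary \<mu> xs ! l) (bary \<mu> ys ! l) \<le> 1/2 * dist (xs ! j) (ys ! j)"
proof (intro allI impI)
  fix l assume l: "l < Suc k"
  show "dist (bary \<mu> xs ! l) (bary \<mu> ys ! l) \<le> 1/2 * dist (xs ! j) (ys ! j)"
  proof (cases "l = j")
    case True
    have "del l xs = del l ys"
      by (rule nth_equalityI) (use len l same True in \<open>auto simp: nth_del\<close>)
    then show ?thesis using len l by (simp add: nth_bary)
  next
    case False
    define j' where "j' = (if j < l then j else j - 1)"
    have j': "j' < k" using j l False unfolding j'_def by auto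
    have e1: "del l xs ! j' = xs ! j" "del l ys ! j' = ys ! j"
      using len l j' False by (auto simp: nth_del j'_def)
    have "dist (\<mu> (del l xs)) (\<mu> (del l ys)) \<le> 1/2 * dist (del l xs ! j') (del l ys ! j')"
      using P unfolding PP_def coord_contractive_def
    proof (elim conjE allE impE)
      show "length (del l xs) = k \<and> length (del l ys) = k \<and> j' < k \<and>
        (\<forall>i<k. i \<noteq> j' \<longrightarrow> del l xs ! i = del l ys ! i)"
        using len l j' same False by (auto simp: nth_del j'_def)
    qed
    then show ?thesis using e1 len l by (simp add: nth_bary)
  qed
qed

end


definition ext :: "('a::metric_space list \<Rightarrow> 'a) \<Rightarrow> 'a list \<Rightarrow> 'a" where
  "ext \<mu> xs = lim (\<lambda>m. (bary \<mu> ^^ m) xs ! 0)"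

definition DD :: "nat \<Rightarrow> 'a::metric_space list \<Rightarrow> real" where
  "DD n xs = (\<Sum>i<n. \<Sum>j<n. dist (xs ! i) (xs ! j))"

lemma DD_ge: "i < n \<Longrightarrow> j < n \<Longrightarrow> dist (xs ! i) (xs ! j) \<le> DD n xs"
proof -
  assume ij: "i < n" "j < n"
  have "dist (xs ! i) (xs ! j) \<le> (\<Sum>j<n. dist (xs ! i) (xs ! j))"
    using ij by (intro member_le_sum) auto
  also have "\<dots> \<le> DD n xs" unfolding DD_def
    using ij by (intro member_le_sum[of i "{..<n}" "\<lambda>i. \<Sum>j<n. dist (xs ! i) (xs ! j)"] sum_nonneg) auto
  finally show ?thesis .
qed

context
  fixes k :: nat and \<mu> :: "'a::{metric_space,complete_space} list \<Rightarrow> 'a"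
  assumes P: "PP k \<mu>" and k2: "k \<ge> 2"
begin

lemma iter_diam:
  assumes len: "length xs = Suc k"
  shows "\<forall>i<Suc k. \<forall>j<Suc k. dist ((bary \<mu> ^^ m) xs ! i) ((bary \<mu> ^^ m) xs ! j) \<le> DD (Suc k) xs / 2 ^ m"
proof (induction m)
  case 0 then show ?case by (simp add: DD_ge)
next
  case (Suc m)
  have "\<forall>i<Suc k. \<forall>j<Suc k. dist (bary \<mu> ((bary \<mu> ^^ m) xs) ! i) (bary \<mu> ((bary \<mu> ^^ m) xs) ! j)
        \<le> DD (Suc k) xs / 2 ^ m / 2"
    using diam_step[OF P k2, of "(bary \<mu> ^^ m) xs" "DD (Suc k) xs / 2 ^ m"] Suc len by simp
  then show ?case by (simp add: field_simps)
qed

lemma iter_move: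
  assumes len: "length xs = Suc k" and i: "i < Suc k"
  shows "dist ((bary \<mu> ^^ Suc m) xs ! i) ((bary \<mu> ^^ m) xs ! i) \<le> DD (Suc k) xs / 2 ^ m"
  using move_step[OF P k2, of "(bary \<mu> ^^ m) xs" "DD (Suc k) xs / 2 ^ m" i] iter_diam[OF len, of m] len i
  by simp

lemma conv:
  assumes len: "length xs = Suc k" and i: "i < Suc k"
  shows "(\<lambda>m. (bary \<mu> ^^ m) xs ! i) \<longlonglongrightarrow> ext \<mu> xs"
proof -
  have "Cauchy (\<lambda>m. (bary \<mu> ^^ m) xs ! 0)"
    by (rule cauchy_geom[of _ "DD (Suc k) xs"]) (use iter_move[OF len, of 0] in simp)
  then have c0: "(\<lambda>m. (bary \<mu> ^^ m) xs ! 0) \<longlonglongrightarrow> ext \<mu> xs"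
    unfolding ext_def using Cauchy_convergent convergent_LIMSEQ_iff by blast
  show ?thesis
    by (rule transfer_lim[OF c0, of _ "DD (Suc k) xs"]) (use iter_diam[OF len] i in simp)
qed

lemma ext_shift:
  assumes len: "length xs = Suc k"
  shows "ext \<mu> (bary \<mu> xs) = ext \<mu> xs"
proof -
  have "(\<lambda>m. (bary \<mu> ^^ m) (bary \<mu> xs) ! 0) \<longlonglongrightarrow> ext \<mu> (bary \<mu> xs)"
    using conv[of "bary \<mu> xs" 0] len by simp
  moreover have "(\<lambda>m. (bary \<mu> ^^ m) (bary \<mu> xs) ! 0) = (\<lambda>m. (bary \<mu> ^^ Suc m) xs ! 0)"
    by (simp add: funpow_swap1)
  moreover have "(\<lambda>m. (bary \<mu> ^^ Suc m) xs ! 0) \<longlonglongrightarrow> ext \<mu> xs"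
    using conv[OF len, of 0] by (rule LIMSEQ_Suc) simp
  ultimately show ?thesis using LIMSEQ_unique by metis
qed

lemma ext_le:
  assumes len: "length xs = Suc k" "length ys = Suc k"
    and E: "\<forall>l<Suc k. dist (xs ! l) (ys ! l) \<le> E"
  shows "dist (ext \<mu> xs) (ext \<mu> ys) \<le> E"
proof -
  have it: "\<forall>l<Suc k. dist ((bary \<mu> ^^ m) xs ! l) ((bary \<mu> ^^ m) ys ! l) \<le> E" for m
  proof (induction m)
    case 0 then show ?case using E by simp
  next
    case (Suc m) then show ?case using ne_step[OF P k2, of "(bary \<mu> ^^ m) xs" "(bary \<mu> ^^ m) ys" E] len by simp
  qed
  have "(\<lambda>m. dist ((bary \<mu> ^^ m) xs ! 0) ((bary \<mu> ^^ m) ys ! 0)) \<longlonglongrightarrow> dist (ext \<mu> xs) (ext \<mu> ys)"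
    using conv[OF len(1), of 0] conv[OF len(2), of 0] by (intro tendsto_dist) auto
  then show ?thesis by (rule LIMSEQ_le_const2) (use it in auto)
qed

lemma ext_rep: "ext \<mu> (replicate (Suc k) x) = x"
proof -
  have r: "(bary \<mu> ^^ m) (replicate (Suc k) x) = replicate (Suc k) x" for m
    by (induction m) (use P in \<open>auto simp: bary_replicate PP_def is_kmean_def simp del: replicate_Suc\<close>)
  have "(\<lambda>m. (bary \<mu> ^^ m) (replicate (Suc k) x) ! 0) \<longlonglongrightarrow> ext \<mu> (replicate (Suc k) x)"
    using conv[of "replicate (Suc k) x" 0] by simp
  then have "(\<lambda>m. x) \<longlonglongrightarrow> ext \<mu> (replicate (Suc k) x)" by (simp only: r nth_replicate zero_less_Suc if_True)
  then show ?thesis using LIMSEQ_unique tendsto_const by metis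
qed

definition FF :: "'a multiset \<Rightarrow> 'a" where "FF M = \<mu> (SOME zs. mset zs = M)"

lemma bary_FF:
  assumes len: "length xs = Suc k"
  shows "bary \<mu> xs = map (\<lambda>a. FF (mset xs - {#a#})) xs"
proof (rule nth_equalityI)
  show "length (bary \<mu> xs) = length (map (\<lambda>a. FF (mset xs - {#a#})) xs)" by simp
  fix j assume "j < length (bary \<mu> xs)"
  then have j: "j < length xs" by simp
  define zs where "zs = (SOME zs. mset zs = mset (del j xs))"
  have zs: "mset zs = mset (del j xs)" unfolding zs_def by (rule someI_ex) auto
  have "\<mu> zs = \<mu> (del j xs)"
    using P zs j len unfolding PP_def symmetric_kmean_def by simp
  then show "bary \<mu> xs ! j = map (\<lambda>a. FF (mset xs - {#a#})) xs ! j"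
    using j mset_del[OF j] by (simp add: nth_bary FF_def zs_def)
qed

lemma ext_sym:
  assumes len: "length xs = Suc k" and ms: "mset ys = mset xs"
  shows "ext \<mu> ys = ext \<mu> xs"
proof -
  have leny: "length ys = Suc k" using len ms by (metis size_mset)
  have msm: "mset ((bary \<mu> ^^ m) ys) = mset ((bary \<mu> ^^ m) xs)" for m
  proof (induction m)
    case 0 then show ?case using ms by simp
  next
    case (Suc m)
    have l1: "length ((bary \<mu> ^^ m) ys) = Suc k" "length ((bary \<mu> ^^ m) xs) = Suc k"
      using len leny by auto
    show ?case using Suc by (simp add: bary_FF[OF l1(1)] bary_FF[OF l1(2)])
  qed
  have "dist ((bary \<mu> ^^ m) ys ! 0) ((bary \<mu> ^^ m) xs ! 0) \<le> DD (Suc k) xs / 2 ^ m" for m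
  proof -
    have "(bary \<mu> ^^ m) ys ! 0 \<in> set ((bary \<mu> ^^ m) ys)" using leny by simp
    then have "(bary \<mu> ^^ m) ys ! 0 \<in> set ((bary \<mu> ^^ m) xs)" using msm[of m]
      by (metis set_mset_mset)
    then obtain l where l: "l < Suc k" "(bary \<mu> ^^ m) ys ! 0 = (bary \<mu> ^^ m) xs ! l"
      using len by (auto simp: in_set_conv_nth)
    then show ?thesis using iter_diam[OF len, of m] by auto
  qed
  then have "(\<lambda>m. (bary \<mu> ^^ m) ys ! 0) \<longlonglongrightarrow> ext \<mu> xs"
    by (intro transfer_lim[OF conv[OF len, of 0]]) auto
  moreover have "(\<lambda>m. (bary \<mu> ^^ m) ys ! 0) \<longlonglongrightarrow> ext \<mu> ys" using conv[OF leny, of 0] by simp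
  ultimately show ?thesis using LIMSEQ_unique by metis
qed

lemma ext_PP: "PP (Suc k) (ext \<mu>)"
  unfolding PP_def
proof (intro conjI)
  show "is_kmean (Suc k) (ext \<mu>)" unfolding is_kmean_def using ext_rep by simp
  show "symmetric_kmean (Suc k) (ext \<mu>)" unfolding symmetric_kmean_def using ext_sym by auto
  show "nonexpansive_kmean (Suc k) (ext \<mu>)" unfolding nonexpansive_kmean_def
  proof (intro allI impI)
    fix xs ys :: "'a list" assume "length xs = Suc k \<and> length ys = Suc k"
    then show "dist (ext \<mu> xs) (ext \<mu> ys) \<le> (MAX j\<in>{..<Suc k}. dist (xs ! j) (ys ! j))"
      by (intro ext_le) auto
  qed
  show "coord_contractive (Suc k) (1/2) (ext \<mu>)" unfolding coord_contractive_def
  proof (intro allI impI)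
    fix xs ys :: "'a list" and j
    assume h: "length xs = Suc k \<and> length ys = Suc k \<and> j < Suc k \<and>
        (\<forall>i<Suc k. i \<noteq> j \<longrightarrow> xs ! i = ys ! i)"
    have "dist (ext \<mu> (bary \<mu> xs)) (ext \<mu> (bary \<mu> ys)) \<le> 1/2 * dist (xs ! j) (ys ! j)"
      using h cc_step[OF P k2, of xs ys j] by (intro ext_le) auto
    then show "dist (ext \<mu> xs) (ext \<mu> ys) \<le> 1/2 * dist (xs ! j) (ys ! j)"
      using h ext_shift by simp
  qed
qed

lemma ext_beta: "beta_extends k \<mu> (ext \<mu>)"
  unfolding beta_extends_def using conv by auto

end


lemma mset2: "mset ys = {#a, b#} \<Longrightarrow> ys = [a, b] \<or> ys = [b, a]"
proof -
  assume h: "mset ys = {#a, b#}"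
  then have "length ys = 2" by (metis size_mset size_add_mset size_empty numeral_2_eq_2 One_nat_def)
  then obtain c d where ys: "ys = [c, d]"
    by (metis (no_types, opaque_lifting) One_nat_def Suc_length_conv length_0_conv numeral_2_eq_2)
  then have "{#c, d#} = {#a, b#}" using h by simp
  then show ?thesis using ys by (metis add_mset_eq_single add_mset_remove_trivial diff_union_swap2 insert_noteq_member)
qed

lemma base_PP:
  fixes mid :: "'a::metric_space \<Rightarrow> 'a \<Rightarrow> 'a"
  assumes cm: "convex_mean mid"
  shows "PP 2 (\<lambda>xs. mid (xs ! 0) (xs ! 1))"
proof -
  have id: "mid x x = x" and cmm: "mid x y = mid y x" and ct: "dist (mid x z) (mid y z) \<le> dist x y / 2"
    for x y z using cm unfolding convex_mean_def by auto
  have len2: "length xs = 2 \<Longrightarrow> xs = [xs ! 0, xs ! 1]" for xs :: "'a list"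
    by (rule nth_equalityI) (auto simp: less_2_cases_iff)
  show ?thesis unfolding PP_def
  proof (intro conjI)
    show "is_kmean 2 (\<lambda>xs. mid (xs ! 0) (xs ! 1))" unfolding is_kmean_def by (simp add: id)
    show "symmetric_kmean 2 (\<lambda>xs. mid (xs ! 0) (xs ! 1))" unfolding symmetric_kmean_def
    proof (intro allI impI)
      fix xs ys :: "'a list" assume h: "length xs = 2 \<and> mset ys = mset xs"
      then have "mset ys = {#xs ! 0, xs ! 1#}" using len2[of xs] by (metis mset.simps add_mset_commute
         add_mset_add_single  empty_neutral(1) mset_single_iff_right)
      then have "ys = [xs ! 0, xs ! 1] \<or> ys = [xs ! 1, xs ! 0]" by (rule mset2)
      then show "mid (ys ! 0) (ys ! 1) = mid (xs ! 0) (xs ! 1)" using cmm by auto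
    qed
    have tri: "dist (mid a b) (mid c d) \<le> dist a c / 2 + dist b d / 2" for a b c d
    proof -
      have "dist (mid a b) (mid c d) \<le> dist (mid a b) (mid c b) + dist (mid c b) (mid c d)"
        by (rule dist_triangle)
      also have "dist (mid c b) (mid c d) = dist (mid b c) (mid d c)" using cmm by simp
      finally show ?thesis using ct[where x=a and y=c and z=b] ct[where x=b and y=d and z=c] by linarith
    qed
    show "nonexpansive_kmean 2 (\<lambda>xs. mid (xs ! 0) (xs ! 1))" unfolding nonexpansive_kmean_def
    proof (intro allI impI)
      fix xs ys :: "'a list"
      have e: "{..<2::nat} = {0, 1}" by auto
      have "dist (mid (xs ! 0) (xs ! 1)) (mid (ys ! 0) (ys ! 1)) \<le> max (dist (xs ! 0) (ys ! 0)) (dist (xs ! 1) (ys ! 1))"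
        using tri[of "xs ! 0" "xs ! 1" "ys ! 0" "ys ! 1"] by linarith
      then show "dist (mid (xs ! 0) (xs ! 1)) (mid (ys ! 0) (ys ! 1)) \<le> (MAX j\<in>{..<2}. dist (xs ! j) (ys ! j))"
        by (simp add: e)
    qed
    show "coord_contractive 2 (1/2) (\<lambda>xs. mid (xs ! 0) (xs ! 1))" unfolding coord_contractive_def
    proof (intro allI impI)
      fix xs ys :: "'a list" and j
      assume h: "length xs = 2 \<and> length ys = 2 \<and> j < 2 \<and> (\<forall>i<2. i \<noteq> j \<longrightarrow> xs ! i = ys ! i)"
      then have "j = 0 \<or> j = 1" by auto
      then show "dist (mid (xs ! 0) (xs ! 1)) (mid (ys ! 0) (ys ! 1)) \<le> 1/2 * dist (xs ! j) (ys ! j)"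
      proof
        assume j: "j = 0"
        then have "xs ! 1 = ys ! 1" using h by auto
        then show ?thesis using ct[where x="xs ! 0" and y="ys ! 0" and z="xs ! 1"] j by simp
      next
        assume j: "j = 1"
        then have "xs ! 0 = ys ! 0" using h by auto
        then show ?thesis using ct[where x="xs ! 1" and y="ys ! 1" and z="xs ! 0"] j cmm by simp
      qed
    qed
  qed
qed

theorem proposition4p4:
  fixes mid :: "'a::{metric_space, complete_space} \<Rightarrow> 'a \<Rightarrow> 'a"
  assumes "convex_mean mid"
  shows "\<exists>\<mu> :: nat \<Rightarrow> 'a list \<Rightarrow> 'a.
     (\<forall>n\<ge>3. is_kmean n (\<mu> n) \<and> symmetric_kmean n (\<mu> n) \<and>
             nonexpansive_kmean n (\<mu> n) \<and> coord_contractive n (1/2) (\<mu> n)) \<and>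
     beta_extends 2 (\<lambda>xs. mid (xs ! 0) (xs ! 1)) (\<mu> 3) \<and>
     (\<forall>n\<ge>3. beta_extends n (\<mu> n) (\<mu> (Suc n)))"
proof -
  define b where "b = (\<lambda>xs::'a list. mid (xs ! 0) (xs ! 1))"
  define M where "M = (\<lambda>n. (ext ^^ (n - 2)) b)"
  have bP: "PP 2 b" unfolding b_def by (rule base_PP[OF assms])
  have Msuc: "M (Suc n) = ext (M n)" if "n \<ge> 2" for n
  proof -
    have e: "Suc n - 2 = Suc (n - 2)" using that by simp
    show ?thesis unfolding M_def e by simp
  qed
  have MP: "PP n (M n)" if "n \<ge> 2" for n
    using that
  proof (induction n rule: dec_induct)
    case base then show ?case using bP by (simp add: M_def)
  next
    case (step n) then show ?case using ext_PP[of n "M n"] Msuc by simp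
  qed
  show ?thesis
  proof (intro exI[of _ M] conjI allI impI)
    fix n :: nat assume "n \<ge> 3"
    then have "PP n (M n)" using MP by simp
    then show "is_kmean n (M n)" "symmetric_kmean n (M n)" "nonexpansive_kmean n (M n)"
      "coord_contractive n (1/2) (M n)" unfolding PP_def by auto
  next
    show "beta_extends 2 (\<lambda>xs. mid (xs ! 0) (xs ! 1)) (M 3)"
    proof -
      have M2: "M 2 = b" by (simp add: M_def)
      have "M 3 = ext b" using Msuc[of 2] M2 by (simp add: numeral_3_eq_3)
      then show ?thesis using ext_beta[OF bP] unfolding b_def by simp
    qed
  next
    fix n :: nat assume "n \<ge> 3"
    then show "beta_extends n (M n) (M (Suc n))" using ext_beta[OF MP[of n]] Msuc[of n] by simp
  qed
qed


end
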